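(* Let $\mathfrak g$ be a finite-dimensional Lie algebra and equip $S(\mathfrak g)=\mathbb{C}[\mathfrak g^*]$ with the Kirillov–Kostant Poisson bracket. Then there is a Poisson-compatible preconnection $\hat\nabla$ on $\mathfrak g^*$ with $$\hat\nabla_v\,{\rm d}w=\tfrac12\,{\rm d}[v,w]\qquad (v,w\in\mathfrak g),$$ whose curvature and torsion are given, for $v,w,z\in\mathfrak g$, by $$R(v,w)\,{\rm d}z=-\tfrac14\,{\rm d}[[v,w],z],\qquad \langle T(v,w),{\rm d}z\rangle=\tfrac12\,[[v,w],z].$$
   Context: The Kirillov–Kostant bracket on $S(\mathfrak g)$ is the Poisson bracket with $\{v,w\}=[v,w]$ for $v,w\in\mathfrak g$ (viewed as linear functions on $\mathfrak g^*$), extended as a biderivation. For a function $a$, $\hat a=\{a,\cdot\}$ is its Hamiltonian vector field; for $v\in\mathfrak g$, $\hat v={\rm ad}_v$. A preconnection assigns to each function $a$ a linear map $\hat\nabla_a$ on $1$-forms with $\hat\nabla_a(b\,\xi)=\{a,b\}\xi+b\,\hat\nabla_a\xi$ and $\hat\nabla_{ab}\xi=a\,\hat\nabla_b\xi+b\,\hat\nabla_a\xi$. It is Poisson-compatible if $\hat\nabla_a{\rm d}b-\hat\nabla_b{\rm d}a={\rm d}\{a,b\}$ for all $a,b$. Its curvature is $R(a,b)=[\hat\nabla_a,\hat\nabla_b]-\hat\nabla_{\{a,b\}}$ and torsion $T(a,b)=\hat\nabla_a\hat b-\hat\nabla_b\hat a-[\hat a,\hat b]$, where for a vector field the action is defined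 by $\langle\hat\nabla_a\hat b,\xi\rangle=\hat a(\langle\hat b,\xi\rangle)-\langle\hat b,\hat\nabla_a\xi\rangle$. *)

theory Defs
  imports Complex_Main "HOL-Library.Poly_Mapping" "HOL-Library.Function_Algebras"
begin

text \<open>The Lie algebra g is C^n with basis indexed by the finite type 'n and
  structure constants c: [e_i, e_j] = sum_k c i j k e_k.  Elements of g are
  coordinate vectors 'n => complex.\<close>

definition lie_br :: "('n::finite \<Rightarrow> 'n \<Rightarrow> 'n \<Rightarrow> complex) \<Rightarrow> ('n \<Rightarrow> complex) \<Rightarrow> ('n \<Rightarrow> complex) \<Rightarrow> ('n \<Rightarrow> complex)" where
  "lie_br c v w = (\<lambda>k. \<Sum>i\<in>UNIV. \<Sum>j\<in>UNIV. v i * w j * c i j k)"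

definition lie_algebra :: "('n::finite \<Rightarrow> 'n \<Rightarrow> 'n \<Rightarrow> complex) \<Rightarrow> bool" where
  "lie_algebra c \<longleftrightarrow>
     (\<forall>v. lie_br c v v = 0) \<and>
     (\<forall>u v w. lie_br c u (lie_br c v w) + lie_br c v (lie_br c w u) + lie_br c w (lie_br c u v) = 0)"

text \<open>S(g) = C[g^*]: polynomials in the coordinates x_i (i.e. the basis vectors e_i viewed
  as linear functions on g^*).\<close>

type_synonym 'n spoly = "('n \<Rightarrow>\<^sub>0 nat) \<Rightarrow>\<^sub>0 complex"

definition cst :: "complex \<Rightarrow> 'n spoly" where
  "cst a = Poly_Mapping.single 0 a"

definition var :: "'n \<Rightarrow> 'n spoly" where
  "var i = Poly_Mapping.single (Poly_Mapping.single i 1) 1"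

text \<open>An element v of g viewed as a linear function on g^*.\<close>
definition lin :: "('n::finite \<Rightarrow> complex) \<Rightarrow> 'n spoly" where
  "lin v = (\<Sum>i\<in>UNIV. cst (v i) * var i)"

definition pdiff :: "'n \<Rightarrow> 'n spoly \<Rightarrow> 'n spoly" where
  "pdiff i p = sum (\<lambda>m::'n \<Rightarrow>\<^sub>0 nat. Poly_Mapping.single (m - Poly_Mapping.single i 1)
                    (of_nat (Poly_Mapping.lookup m i) * Poly_Mapping.lookup p m)) (Poly_Mapping.keys p)"

definition pb :: "('n::finite \<Rightarrow> 'n \<Rightarrow> 'n \<Rightarrow> complex) \<Rightarrow> 'n spoly \<Rightarrow> 'n spoly \<Rightarrow> 'n spoly" where
  "pb c a b = (\<Sum>i\<in>UNIV. \<Sum>j\<in>UNIV. \<Sum>k\<in>UNIV.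
                 cst (c i j k) * var k * pdiff i a * pdiff j b)"

text \<open>1-forms on g^*: the free S(g)-module with basis dx_i, represented by coefficient
  functions.  Vector fields likewise by components X_i = X(x_i).\<close>
type_synonym 'n form1 = "'n \<Rightarrow> 'n spoly"
type_synonym 'n vfield = "'n \<Rightarrow> 'n spoly"

definition dif :: "'n spoly \<Rightarrow> 'n form1" where
  "dif a = (\<lambda>i. pdiff i a)"

definition fmul :: "'n spoly \<Rightarrow> 'n form1 \<Rightarrow> 'n form1" where
  "fmul b \<xi> = (\<lambda>i. b * \<xi> i)"

definition pairing :: "'n::finite vfield \<Rightarrow> 'n form1 \<Rightarrow> 'n spoly" where
  "pairing X \<xi> = (\<Sum>i\<in>UNIV. X i * \<xi> i)"

definition vf_apply :: "'n::finite vfield \<Rightarrow> 'n spoly \<Rightarrow> 'n spoly" where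
  "vf_apply X b = (\<Sum>i\<in>UNIV. X i * pdiff i b)"

definition ham :: "('n::finite \<Rightarrow> 'n \<Rightarrow> 'n \<Rightarrow> complex) \<Rightarrow> 'n spoly \<Rightarrow> 'n vfield" where
  "ham c a = (\<lambda>i. pb c a (var i))"

definition vf_comm :: "'n::finite vfield \<Rightarrow> 'n vfield \<Rightarrow> 'n vfield" where
  "vf_comm X Y = (\<lambda>i. vf_apply X (Y i) - vf_apply Y (X i))"

text \<open>Preconnection: for each a a C-linear map on 1-forms, with the two Leibniz rules;
  the assignment a |-> nabla_a is taken C-linear.\<close>
definition preconnection ::
  "('n::finite \<Rightarrow> 'n \<Rightarrow> 'n \<Rightarrow> complex) \<Rightarrow> ('n spoly \<Rightarrow> 'n form1 \<Rightarrow> 'n form1) \<Rightarrow> bool" where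
  "preconnection c N \<longleftrightarrow>
     (\<forall>a \<xi> \<eta>. N a (\<xi> + \<eta>) = N a \<xi> + N a \<eta>) \<and>
     (\<forall>a (s::complex) \<xi>. N a (fmul (cst s) \<xi>) = fmul (cst s) (N a \<xi>)) \<and>
     (\<forall>a b \<xi>. N (a + b) \<xi> = N a \<xi> + N b \<xi>) \<and>
     (\<forall>a (s::complex) \<xi>. N (cst s * a) \<xi> = fmul (cst s) (N a \<xi>)) \<and>
     (\<forall>a b \<xi>. N a (fmul b \<xi>) = fmul (pb c a b) \<xi> + fmul b (N a \<xi>)) \<and>
     (\<forall>a b \<xi>. N (a * b) \<xi> = fmul a (N b \<xi>) + fmul b (N a \<xi>))"

definition poisson_compatible ::
  "('n::finite \<Rightarrow> 'n \<Rightarrow> 'n \<Rightarrow> complex) \<Rightarrow> ('n spoly \<Rightarrow> 'n form1 \<Rightarrow> 'n form1) \<Rightarrow> bool" where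
  "poisson_compatible c N \<longleftrightarrow>
     (\<forall>a b. N a (dif b) - N b (dif a) = dif (pb c a b))"

definition curvature ::
  "('n::finite \<Rightarrow> 'n \<Rightarrow> 'n \<Rightarrow> complex) \<Rightarrow> ('n spoly \<Rightarrow> 'n form1 \<Rightarrow> 'n form1)
     \<Rightarrow> 'n spoly \<Rightarrow> 'n spoly \<Rightarrow> 'n form1 \<Rightarrow> 'n form1" where
  "curvature c N a b \<xi> = N a (N b \<xi>) - N b (N a \<xi>) - N (pb c a b) \<xi>"

text \<open>Action of nabla_a on a vector field X, defined by
  <nabla_a X, xi> = a-hat(<X, xi>) - <X, nabla_a xi>; components taken against dx_i.\<close>
definition nablaV ::
  "('n::finite \<Rightarrow> 'n \<Rightarrow> 'n \<Rightarrow> complex) \<Rightarrow> ('n spoly \<Rightarrow> 'n form1 \<Rightarrow> 'n form1)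
     \<Rightarrow> 'n spoly \<Rightarrow> 'n vfield \<Rightarrow> 'n vfield" where
  "nablaV c N a X = (\<lambda>i. pb c a (pairing X (dif (var i))) - pairing X (N a (dif (var i))))"

definition torsion ::
  "('n::finite \<Rightarrow> 'n \<Rightarrow> 'n \<Rightarrow> complex) \<Rightarrow> ('n spoly \<Rightarrow> 'n form1 \<Rightarrow> 'n form1)
     \<Rightarrow> 'n spoly \<Rightarrow> 'n spoly \<Rightarrow> 'n vfield" where
  "torsion c N a b = nablaV c N a (ham c b) - nablaV c N b (ham c a) - vf_comm (ham c a) (ham c b)"

end

theory Submission
  imports Defs
begin


abbreviation ee :: "'n \<Rightarrow> ('n \<Rightarrow>\<^sub>0 nat)" where "ee i \<equiv> Poly_Mapping.single i (1::nat)"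

lemma pdiff_superset:
  assumes "finite S" "Poly_Mapping.keys p \<subseteq> S"
  shows "pdiff i p = (\<Sum>m\<in>S. Poly_Mapping.single (m - ee i) (of_nat (Poly_Mapping.lookup m i) * Poly_Mapping.lookup p m))"
  unfolding pdiff_def
  by (rule sum.mono_neutral_left) (use assms in \<open>auto simp: in_keys_iff\<close>)

lemma pdiff_add: "pdiff i (p + q) = pdiff i p + pdiff i q"
proof -
  let ?S = "Poly_Mapping.keys p \<union> Poly_Mapping.keys q"
  have f: "finite ?S" by simp
  have "pdiff i (p+q) = (\<Sum>m\<in>?S. Poly_Mapping.single (m - ee i) (of_nat (Poly_Mapping.lookup m i) * Poly_Mapping.lookup (p+q) m))"
    using keys_add[of p q] by (intro pdiff_superset) auto
  also have "\<dots> = (\<Sum>m\<in>?S. Poly_Mapping.single (m - ee i) (of_nat (Poly_Mapping.lookup m i) * Poly_Mapping.lookup p m))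
     + (\<Sum>m\<in>?S. Poly_Mapping.single (m - ee i) (of_nat (Poly_Mapping.lookup m i) * Poly_Mapping.lookup q m))"
    by (simp add: lookup_add distrib_left single_add sum.distrib)
  also have "\<dots> = pdiff i p + pdiff i q"
    by (subst (1 2) pdiff_superset[OF f]) auto
  finally show ?thesis .
qed

lemma pdiff_zero[simp]: "pdiff i 0 = 0"
  by (simp add: pdiff_def)

lemma pdiff_sum: "pdiff i (sum f A) = (\<Sum>x\<in>A. pdiff i (f x))"
  by (induction A rule: infinite_finite_induct) (auto simp: pdiff_add)

lemma pdiff_uminus: "pdiff i (- p) = - pdiff i p"
proof -
  have "pdiff i (- p) + pdiff i p = 0" using pdiff_add[of i "-p" p] by simp
  then show ?thesis by (simp add: eq_neg_iff_add_eq_0)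
qed

lemma pdiff_diff: "pdiff i (p - q) = pdiff i p - pdiff i q"
  unfolding diff_conv_add_uminus pdiff_add pdiff_uminus by simp

lemma pdiff_single: "pdiff i (Poly_Mapping.single m a) = Poly_Mapping.single (m - ee i) (of_nat (Poly_Mapping.lookup m i) * a)"
  by (subst pdiff_superset[of "{m}"]) auto

lemma poly_decomp: "p = (\<Sum>m\<in>Poly_Mapping.keys p. Poly_Mapping.single m (Poly_Mapping.lookup p m))"
proof (rule poly_mapping_eqI)
  fix k
  show "Poly_Mapping.lookup p k = Poly_Mapping.lookup (\<Sum>m\<in>Poly_Mapping.keys p. Poly_Mapping.single m (Poly_Mapping.lookup p m)) k"
    by (auto simp: lookup_sum lookup_single when_def in_keys_iff)
qed

lemma additive_ext:
  fixes F G :: "('a \<Rightarrow>\<^sub>0 'b::comm_monoid_add) \<Rightarrow> 'c::ab_group_add"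
  assumes F: "\<And>p q. F (p+q) = F p + F q" and G: "\<And>p q. G (p+q) = G p + G q"
    and FG: "\<And>m a. F (Poly_Mapping.single m a) = G (Poly_Mapping.single m a)"
  shows "F p = G p"
proof -
  have F0: "F 0 = 0" using F[of 0 0] by simp
  have G0: "G 0 = 0" using G[of 0 0] by simp
  have Fs: "F (sum f A) = (\<Sum>x\<in>A. F (f x))" for f :: "'d \<Rightarrow> _" and A
    by (induction A rule: infinite_finite_induct) (auto simp: F F0)
  have Gs: "G (sum f A) = (\<Sum>x\<in>A. G (f x))" for f :: "'d \<Rightarrow> _" and A
    by (induction A rule: infinite_finite_induct) (auto simp: G G0)
  have "F p = F (\<Sum>m\<in>Poly_Mapping.keys p. Poly_Mapping.single m (Poly_Mapping.lookup p m))"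
    by (subst poly_decomp) simp
  also have "\<dots> = G (\<Sum>m\<in>Poly_Mapping.keys p. Poly_Mapping.single m (Poly_Mapping.lookup p m))"
    by (simp add: Fs Gs FG)
  also have "\<dots> = G p" by (subst (2) poly_decomp) simp
  finally show ?thesis .
qed

lemma pdiff_mult_single:
  "pdiff i (Poly_Mapping.single m a * Poly_Mapping.single n b) =
    Poly_Mapping.single m a * pdiff i (Poly_Mapping.single n b) + pdiff i (Poly_Mapping.single m a) * Poly_Mapping.single n b"
proof -
  have e1: "m + (n - ee i) = m + n - ee i" if "Poly_Mapping.lookup n i > 0"
    using that by (intro poly_mapping_eqI) (auto simp: lookup_minus lookup_add lookup_single when_def)
  have e2: "(m - ee i) + n = m + n - ee i" if "Poly_Mapping.lookup m i > 0"
    using that by (intro poly_mapping_eqI) (auto simp: lookup_minus lookup_add lookup_single when_def)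
  have T1: "Poly_Mapping.single m a * pdiff i (Poly_Mapping.single n b) = Poly_Mapping.single (m + n - ee i) (of_nat (Poly_Mapping.lookup n i) * (a*b))"
  proof (cases "Poly_Mapping.lookup n i > 0")
    case True
    show ?thesis unfolding pdiff_single mult_single e1[OF True] by (simp add: algebra_simps)
  next
    case False
    then show ?thesis unfolding pdiff_single mult_single by simp
  qed
  have T2: "pdiff i (Poly_Mapping.single m a) * Poly_Mapping.single n b = Poly_Mapping.single (m + n - ee i) (of_nat (Poly_Mapping.lookup m i) * (a*b))"
  proof (cases "Poly_Mapping.lookup m i > 0")
    case True
    show ?thesis unfolding pdiff_single mult_single e2[OF True] by (simp add: algebra_simps)
  next
    case False
    then show ?thesis unfolding pdiff_single mult_single by simp
  qed
  show ?thesis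
    by (simp only: T1 T2) (simp add: mult_single pdiff_single lookup_add algebra_simps flip: single_add)
qed

lemma pdiff_mult: "pdiff i (p * q) = p * pdiff i q + pdiff i p * q"
proof (rule additive_ext[where F="\<lambda>p. pdiff i (p * q)" and G="\<lambda>p. p * pdiff i q + pdiff i p * q"])
  fix m a
  show "pdiff i (Poly_Mapping.single m a * q) = Poly_Mapping.single m a * pdiff i q + pdiff i (Poly_Mapping.single m a) * q"
  proof (rule additive_ext[where F="\<lambda>q. pdiff i (Poly_Mapping.single m a * q)"])
    fix p q
    show "Poly_Mapping.single m a * pdiff i (p + q) + pdiff i (Poly_Mapping.single m a) * (p + q) =
       (Poly_Mapping.single m a * pdiff i p + pdiff i (Poly_Mapping.single m a) * p) +
       (Poly_Mapping.single m a * pdiff i q + pdiff i (Poly_Mapping.single m a) * q)"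
      by (simp only: pdiff_add distrib_left add_ac)
  qed (simp_all only: pdiff_mult_single pdiff_add distrib_left)
next
  fix p p'
  show "(p + p') * pdiff i q + pdiff i (p + p') * q = (p * pdiff i q + pdiff i p * q) + (p' * pdiff i q + pdiff i p' * q)"
    by (simp only: pdiff_add distrib_right add_ac)
qed (simp only: pdiff_add distrib_right)

lemma pdiff_comm: "pdiff i (pdiff k p) = pdiff k (pdiff i p)"
proof (rule additive_ext[where F="\<lambda>p. pdiff i (pdiff k p)"])
  fix m a
  show "pdiff i (pdiff k (Poly_Mapping.single m a)) = pdiff k (pdiff i (Poly_Mapping.single m a))"
  proof (cases "i = k")
    case False
    have e: "m - ee k - ee i = m - ee i - ee k"
      by (intro poly_mapping_eqI) (simp add: lookup_minus lookup_single when_def)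
    have 1: "pdiff i (pdiff k (Poly_Mapping.single m a)) = Poly_Mapping.single (m - ee k - ee i) (of_nat (Poly_Mapping.lookup m i) * of_nat (Poly_Mapping.lookup m k) * a)"
      unfolding pdiff_single using False by (simp add: lookup_minus lookup_single mult.assoc)
    have 2: "pdiff k (pdiff i (Poly_Mapping.single m a)) = Poly_Mapping.single (m - ee i - ee k) (of_nat (Poly_Mapping.lookup m k) * of_nat (Poly_Mapping.lookup m i) * a)"
      unfolding pdiff_single using False by (simp add: lookup_minus lookup_single mult.assoc)
    show ?thesis unfolding 1 2 by (subst e) (simp add: mult.commute)
  next
    case True
    then show ?thesis by (simp only:)
  qed
qed (simp_all only: pdiff_add)



lemma cst_add: "cst (a + b) = cst a + cst b" by (simp add: cst_def single_add)
lemma cst_mult: "cst (a * b) = cst a * cst b" by (simp add: cst_def mult_single)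
lemma cst_0[simp]: "cst 0 = 0" by (simp add: cst_def)
lemma cst_1[simp]: "cst 1 = 1" by (simp add: cst_def)
lemma cst_uminus: "cst (- a) = - cst a" by (simp add: cst_def single_uminus)
lemma cst_diff: "cst (a - b) = cst a - cst b" by (simp add: cst_def single_diff)
lemma cst_sum: "cst (sum f A) = (\<Sum>x\<in>A. cst (f x))"
  by (induction A rule: infinite_finite_induct) (auto simp: cst_add)

lemma pdiff_cst[simp]: "pdiff i (cst s) = 0"
  by (simp add: cst_def pdiff_single)

lemma pdiff_var: "pdiff i (var j) = (if i = j then 1 else 0)"
  by (auto simp: var_def pdiff_single lookup_single)

lemma pdiff_cst_mult: "pdiff i (cst s * p) = cst s * pdiff i p"
  by (simp add: pdiff_mult)

lemma pdiff_lin: "pdiff i (lin v) = cst (v i)"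
proof -
  have "pdiff i (lin v) = (\<Sum>x\<in>UNIV. (if i = x then cst (v x) else 0))"
    unfolding lin_def pdiff_sum pdiff_mult pdiff_var by (intro sum.cong) auto
  then show ?thesis by simp
qed

definition PI :: "('n::finite \<Rightarrow> 'n \<Rightarrow> 'n \<Rightarrow> complex) \<Rightarrow> 'n \<Rightarrow> 'n \<Rightarrow> 'n spoly" where
  "PI c i j = (\<Sum>k\<in>UNIV. cst (c i j k) * var k)"

lemma pb_alt: "pb c a b = (\<Sum>i\<in>UNIV. \<Sum>j\<in>UNIV. PI c i j * pdiff i a * pdiff j b)"
  by (simp add: pb_def PI_def sum_distrib_right)

lemma pb_add2: "pb c a (b + b') = pb c a b + pb c a b'"
  by (simp add: pb_alt pdiff_add distrib_left sum.distrib)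
lemma pb_add1: "pb c (a + a') b = pb c a b + pb c a' b"
  by (simp add: pb_alt pdiff_add distrib_left distrib_right sum.distrib)
lemma pb_mult2: "pb c a (b * b') = b * pb c a b' + b' * pb c a b"
  by (simp add: pb_alt pdiff_mult sum_distrib_left sum.distrib algebra_simps)
lemma pb_mult1: "pb c (a * a') b = a * pb c a' b + a' * pb c a b"
  by (simp add: pb_alt pdiff_mult sum_distrib_left sum.distrib algebra_simps)
lemma pb_cst2[simp]: "pb c a (cst s) = 0"
  by (simp add: pb_alt)
lemma pb_cst1[simp]: "pb c (cst s) b = 0"
  by (simp add: pb_alt)
lemma pb_cst_mult2: "pb c a (cst s * b) = cst s * pb c a b"
  by (simp add: pb_mult2)
lemma pb_cst_mult1: "pb c (cst s * a) b = cst s * pb c a b"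
  by (simp add: pb_mult1)
lemma pb_zero2[simp]: "pb c a 0 = 0"
  by (simp add: pb_alt)
lemma pb_sum2: "pb c a (sum f A) = (\<Sum>x\<in>A. pb c a (f x))"
  by (induction A rule: infinite_finite_induct) (auto simp: pb_add2)

lemma sum_swap3: "(\<Sum>k\<in>A. \<Sum>i\<in>B. \<Sum>j\<in>C. F i j k) = (\<Sum>i\<in>B. \<Sum>j\<in>C. \<Sum>k\<in>A. F i j k)"
  by (subst sum.swap, rule sum.cong[OF refl], rule sum.swap)

lemma lin_lie: "lin (lie_br c v w) = (\<Sum>i\<in>UNIV. \<Sum>j\<in>UNIV. PI c i j * cst (v i) * cst (w j))"
proof -
  have "lin (lie_br c v w) = (\<Sum>k\<in>UNIV. \<Sum>i\<in>UNIV. \<Sum>j\<in>UNIV. cst (c i j k) * var k * cst (v i) * cst (w j))"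
    by (simp add: lin_def lie_br_def cst_sum cst_mult sum_distrib_right sum_distrib_left mult_ac)
  also have "\<dots> = (\<Sum>i\<in>UNIV. \<Sum>j\<in>UNIV. \<Sum>k\<in>UNIV. cst (c i j k) * var k * cst (v i) * cst (w j))"
    by (rule sum_swap3)
  also have "\<dots> = (\<Sum>i\<in>UNIV. \<Sum>j\<in>UNIV. PI c i j * cst (v i) * cst (w j))"
    by (simp add: PI_def sum_distrib_right)
  finally show ?thesis .
qed

lemma pb_lin: "pb c (lin v) (lin w) = lin (lie_br c v w)"
  by (simp add: pb_alt pdiff_lin lin_lie)



definition delta :: "'n \<Rightarrow> 'n \<Rightarrow> complex" where "delta i = (\<lambda>a. if a = i then 1 else 0)"

lemma lie_br_add1: "lie_br c (u + u') w = lie_br c u w + lie_br c u' w"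
  by (rule ext) (simp add: lie_br_def distrib_left distrib_right sum.distrib)
lemma lie_br_add2: "lie_br c w (u + u') = lie_br c w u + lie_br c w u'"
  by (rule ext) (simp add: lie_br_def distrib_left distrib_right sum.distrib)
lemma ite_mult1: "(if P then 1 else 0) * x = (if P then x else (0::'a::semiring_1))" by simp
lemma ite_mult2: "x * (if P then 1 else 0) = (if P then x else (0::'a::semiring_1))" by simp

lemma lie_br_delta: "lie_br c (delta i) (delta j) k = c i j k"
proof -
  have "lie_br c (delta i) (delta j) k = (\<Sum>a\<in>UNIV. if a = i then (\<Sum>b\<in>UNIV. if b = j then c a b k else 0) else 0)"
    unfolding lie_br_def delta_def by (intro sum.cong refl) (auto simp: ite_mult1)
  then show ?thesis by simp
qed

lemma c_antisym:
  assumes "lie_algebra c" shows "c j i k = - c i j k"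
proof -
  have h: "lie_br c v v = 0" for v using assms by (simp add: lie_algebra_def)
  have "lie_br c (delta i + delta j) (delta i + delta j) k = 0" using h by simp
  then have "c i i k + c i j k + (c j i k + c j j k) = 0"
    by (simp add: lie_br_add1 lie_br_add2 lie_br_delta add_ac)
  moreover have "c i i k = 0" "c j j k = 0" using h[of "delta i"] h[of "delta j"]
    by (metis lie_br_delta zero_fun_apply)+
  ultimately have "c j i k + c i j k = 0" by (simp add: add_ac)
  then show ?thesis by (simp add: eq_neg_iff_add_eq_0)
qed

lemma PI_antisym: "lie_algebra c \<Longrightarrow> PI c j i = - PI c i j"
  by (simp add: PI_def c_antisym[of c i j] cst_uminus sum_negf)

lemma pdiff_PI: "pdiff l (PI c i j) = cst (c i j l)"
proof -
  have "pdiff l (PI c i j) = (\<Sum>k\<in>UNIV. if l = k then cst (c i j k) else 0)"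
    unfolding PI_def pdiff_sum pdiff_cst_mult pdiff_var by (intro sum.cong) auto
  then show ?thesis by simp
qed

definition Gm :: "('n::finite \<Rightarrow> 'n \<Rightarrow> 'n \<Rightarrow> complex) \<Rightarrow> 'n spoly \<Rightarrow> 'n \<Rightarrow> 'n \<Rightarrow> 'n spoly" where
  "Gm c a j k = (\<Sum>i\<in>UNIV. pdiff i a * cst (c i j k))"

definition NN :: "('n::finite \<Rightarrow> 'n \<Rightarrow> 'n \<Rightarrow> complex) \<Rightarrow> 'n spoly \<Rightarrow> 'n form1 \<Rightarrow> 'n form1" where
  "NN c a \<xi> = (\<lambda>k. pb c a (\<xi> k) + cst (1/2) * (\<Sum>j\<in>UNIV. \<xi> j * Gm c a j k))"

lemma Gm_add: "Gm c (a + b) j k = Gm c a j k + Gm c b j k"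
  by (simp add: Gm_def pdiff_add distrib_right sum.distrib)
lemma Gm_mult: "Gm c (a * b) j k = a * Gm c b j k + b * Gm c a j k"
  by (simp add: Gm_def pdiff_mult sum_distrib_left sum.distrib algebra_simps)
lemma Gm_cst[simp]: "Gm c (cst s) j k = 0" by (simp add: Gm_def)
lemma Gm_cst_mult: "Gm c (cst s * a) j k = cst s * Gm c a j k"
  by (simp add: Gm_mult)

lemma NN_pre: "preconnection c (NN c)"
  unfolding preconnection_def
proof (intro conjI allI)
  fix a \<xi> \<eta>
  show "NN c a (\<xi> + \<eta>) = NN c a \<xi> + NN c a \<eta>"
    by (rule ext) (simp add: NN_def pb_add2 distrib_right sum.distrib algebra_simps)
next
  fix a s \<xi>
  show "NN c a (fmul (cst s) \<xi>) = fmul (cst s) (NN c a \<xi>)"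
    by (rule ext) (simp add: NN_def fmul_def pb_cst_mult2 sum_distrib_left algebra_simps)
next
  fix a b \<xi>
  show "NN c (a + b) \<xi> = NN c a \<xi> + NN c b \<xi>"
    by (rule ext) (simp add: NN_def pb_add1 Gm_add sum.distrib algebra_simps)
next
  fix a s \<xi>
  show "NN c (cst s * a) \<xi> = fmul (cst s) (NN c a \<xi>)"
    apply (rule ext)
    apply (simp only: NN_def fmul_def pb_cst_mult1 Gm_cst_mult)
    by (simp add: sum_distrib_left algebra_simps)
next
  fix a b \<xi>
  show "NN c a (fmul b \<xi>) = fmul (pb c a b) \<xi> + fmul b (NN c a \<xi>)"
    by (rule ext) (simp add: NN_def fmul_def pb_mult2 sum_distrib_left algebra_simps)
next
  fix a b \<xi>
  show "NN c (a * b) \<xi> = fmul a (NN c b \<xi>) + fmul b (NN c a \<xi>)"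
    by (rule ext) (simp add: NN_def fmul_def pb_mult1 Gm_mult sum_distrib_left sum.distrib algebra_simps)
qed

lemma half_cst: "cst (1/2) * x + cst (1/2) * x = (x::'n spoly)"
proof -
  have "cst (1/2) * x + cst (1/2) * x = (cst (1/2) + cst (1/2)) * x" by (rule distrib_right[symmetric])
  also have "\<dots> = cst (1/2 + 1/2) * x" by (simp only: cst_add)
  finally show ?thesis by simp
qed

lemma NN_poisson:
  assumes L: "lie_algebra c"
  shows "poisson_compatible c (NN c)"
  unfolding poisson_compatible_def
proof (intro allI ext)
  fix a b l
  define S where "S = (\<Sum>i\<in>UNIV. \<Sum>j\<in>UNIV. cst (c i j l) * pdiff i a * pdiff j b)"
  define P1 where "P1 = (\<Sum>i\<in>UNIV. \<Sum>j\<in>UNIV. PI c i j * pdiff l (pdiff i a) * pdiff j b)"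
  define P2 where "P2 = (\<Sum>i\<in>UNIV. \<Sum>j\<in>UNIV. PI c i j * pdiff i a * pdiff l (pdiff j b))"
  have D: "pdiff l (pb c a b) = S + P1 + P2"
    by (simp add: S_def P1_def P2_def pb_alt pdiff_sum pdiff_mult pdiff_PI sum.distrib algebra_simps)
  have A: "pb c a (pdiff l b) = P2"
    by (simp add: P2_def pb_alt pdiff_comm)
  have B: "pb c b (pdiff l a) = - P1"
  proof -
    have "pb c b (pdiff l a) = (\<Sum>j\<in>UNIV. \<Sum>i\<in>UNIV. PI c i j * pdiff i b * pdiff j (pdiff l a))"
      unfolding pb_alt by (rule sum.swap)
    also have "\<dots> = (\<Sum>j\<in>UNIV. \<Sum>i\<in>UNIV. - (PI c j i * pdiff l (pdiff j a) * pdiff i b))"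
      apply (intro sum.cong refl)
      subgoal for j i by (simp add: PI_antisym[OF L, of j i] pdiff_comm algebra_simps)
      done
    finally show ?thesis by (simp add: P1_def sum_negf)
  qed
  have X: "(\<Sum>j\<in>UNIV. dif b j * Gm c a j l) = S"
  proof -
    have "(\<Sum>j\<in>UNIV. dif b j * Gm c a j l) = (\<Sum>j\<in>UNIV. \<Sum>i\<in>UNIV. cst (c i j l) * pdiff i a * pdiff j b)"
      by (simp add: dif_def Gm_def sum_distrib_left algebra_simps)
    also have "\<dots> = S" unfolding S_def by (rule sum.swap)
    finally show ?thesis .
  qed
  have Y: "(\<Sum>j\<in>UNIV. dif a j * Gm c b j l) = - S"
  proof -
    have "(\<Sum>j\<in>UNIV. dif a j * Gm c b j l) = (\<Sum>j\<in>UNIV. \<Sum>i\<in>UNIV. cst (c i j l) * pdiff j a * pdiff i b)"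
      by (simp add: dif_def Gm_def sum_distrib_left algebra_simps)
    also have "\<dots> = (\<Sum>j\<in>UNIV. \<Sum>i\<in>UNIV. - (cst (c j i l) * pdiff j a * pdiff i b))"
      apply (intro sum.cong refl)
      subgoal for j i by (simp add: c_antisym[OF L, of j i l] cst_uminus)
      done
    finally show ?thesis by (simp add: S_def sum_negf)
  qed
  show "(NN c a (dif b) - NN c b (dif a)) l = dif (pb c a b) l"
    apply (simp add: NN_def X Y)
    apply (simp add: dif_def D A B)
    using half_cst[of S] by (simp add: algebra_simps)
qed



lemma dif_lin: "dif (lin z) = (\<lambda>j. cst (z j))"
  by (simp add: dif_def pdiff_lin)

lemma dif_var: "dif (var i) = (\<lambda>j. cst (delta i j))"
  by (rule ext) (simp add: dif_def pdiff_var delta_def)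

lemma lin_add: "lin u + lin u' = lin (\<lambda>k. u k + u' k)"
  by (simp add: lin_def cst_add distrib_right sum.distrib)
lemma lin_diff: "lin u - lin u' = lin (\<lambda>k. u k - u' k)"
  by (simp add: lin_def cst_diff left_diff_distrib sum_subtractf)
lemma lin_scal: "cst s * lin u = lin (\<lambda>k. s * u k)"
  by (simp add: lin_def cst_mult sum_distrib_left mult.assoc)

lemma lie_br_scal2: "lie_br c v (\<lambda>k. s * f k) = (\<lambda>k. s * lie_br c v f k)"
  by (rule ext) (simp add: lie_br_def sum_distrib_left mult_ac)

lemma lie_br_div2: "lie_br c v (\<lambda>k. f k / s) = (\<lambda>k. lie_br c v f k / s)"
  by (rule ext) (simp add: lie_br_def sum_divide_distrib)

lemma Gm_lin: "Gm c (lin v) j k = cst (\<Sum>i\<in>UNIV. v i * c i j k)"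
  by (simp add: Gm_def pdiff_lin cst_sum cst_mult)

lemma NN_lin_const: "NN c (lin v) (\<lambda>j. cst (f j)) = (\<lambda>k. cst (1/2 * lie_br c v f k))"
proof (rule ext)
  fix k
  have "(\<Sum>j\<in>UNIV. cst (f j) * Gm c (lin v) j k) = cst (\<Sum>j\<in>UNIV. \<Sum>i\<in>UNIV. v i * f j * c i j k)"
    by (simp add: Gm_lin cst_sum cst_mult sum_distrib_left mult_ac)
  also have "\<dots> = cst (lie_br c v f k)"
    unfolding lie_br_def by (subst sum.swap) simp
  finally show "NN c (lin v) (\<lambda>j. cst (f j)) k = cst (1/2 * lie_br c v f k)"
    by (simp add: NN_def flip: cst_mult)
qed

lemma NN_lin_dif: "NN c (lin v) (dif (lin w)) = fmul (cst (1/2)) (dif (lin (lie_br c v w)))"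
  by (rule ext) (simp add: dif_lin NN_lin_const fmul_def flip: cst_mult)

lemma lie_br_uminus2: "lie_br c w (\<lambda>k. - u k) = (\<lambda>k. - lie_br c w u k)"
  by (rule ext) (simp add: lie_br_def sum_negf)

lemma lie_br_antisym:
  assumes L: "lie_algebra c" shows "lie_br c y x = (\<lambda>k. - lie_br c x y k)"
proof (rule ext)
  fix k
  have "lie_br c y x k = (\<Sum>j\<in>UNIV. \<Sum>i\<in>UNIV. y j * x i * c j i k)"
    unfolding lie_br_def by (rule refl)
  also have "\<dots> = (\<Sum>j\<in>UNIV. \<Sum>i\<in>UNIV. - (x i * y j * c i j k))"
    apply (intro sum.cong refl)
    subgoal for j i by (simp add: c_antisym[OF L, of i j k])
    done
  also have "\<dots> = - lie_br c x y k"
    unfolding lie_br_def by (simp add: sum_negf) (rule sum.swap)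
  finally show "lie_br c y x k = - lie_br c x y k" .
qed

lemma jacobi':
  assumes L: "lie_algebra c"
  shows "lie_br c v (lie_br c w z) k - lie_br c w (lie_br c v z) k = lie_br c (lie_br c v w) z k"
proof -
  have J: "lie_br c v (lie_br c w z) + lie_br c w (lie_br c z v) + lie_br c z (lie_br c v w) = 0"
    using L by (simp add: lie_algebra_def)
  have 1: "lie_br c w (lie_br c z v) k = - lie_br c w (lie_br c v z) k"
    by (simp add: lie_br_antisym[OF L, of z v] lie_br_uminus2)
  have 2: "lie_br c z (lie_br c v w) k = - lie_br c (lie_br c v w) z k"
    by (simp add: lie_br_antisym[OF L, of z "lie_br c v w"])
  have "lie_br c v (lie_br c w z) k + lie_br c w (lie_br c z v) k + lie_br c z (lie_br c v w) k = 0"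
    using fun_cong[OF J, of k] by simp
  then show ?thesis unfolding 1 2 by (simp add: algebra_simps)
qed

lemma NN_curv:
  assumes L: "lie_algebra c"
  shows "curvature c (NN c) (lin v) (lin w) (dif (lin z))
                = fmul (cst (-1/4)) (dif (lin (lie_br c (lie_br c v w) z)))"
proof (rule ext)
  fix k
  have j: "lie_br c v (lie_br c w z) k - lie_br c w (lie_br c v z) k = lie_br c (lie_br c v w) z k"
    by (rule jacobi'[OF L])
  show "curvature c (NN c) (lin v) (lin w) (dif (lin z)) k = fmul (cst (-1/4)) (dif (lin (lie_br c (lie_br c v w) z))) k"
    unfolding curvature_def
    apply (simp add: dif_lin NN_lin_const pb_lin lie_br_scal2 lie_br_div2 fmul_def flip: cst_mult cst_diff)
    apply (rule arg_cong[where f=cst])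
    using j by (simp add: algebra_simps)
qed



lemma pairing_dif_lin: "pairing X (dif (lin z)) = (\<Sum>i\<in>UNIV. X i * cst (z i))"
  by (simp add: pairing_def dif_lin)

lemma pairing_diff: "pairing (A - B) \<xi> = pairing A \<xi> - pairing B \<xi>"
  by (simp add: pairing_def left_diff_distrib sum_subtractf)

lemma pb_sum_cst2: "pb c a (\<Sum>i\<in>UNIV. X i * cst (z i)) = (\<Sum>i\<in>UNIV. pb c a (X i) * cst (z i))"
  by (simp add: pb_sum2 pb_cst_mult2[unfolded mult.commute[of "cst _"]] mult.commute)

lemma pairing_ham: "pairing (ham c a) (dif (lin z)) = pb c a (lin z)"
proof -
  have "lin z = (\<Sum>i\<in>UNIV. var i * cst (z i))" by (simp add: lin_def mult.commute)
  then have "pb c a (lin z) = (\<Sum>i\<in>UNIV. pb c a (var i) * cst (z i))" by (simp only: pb_sum_cst2)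
  then show ?thesis by (simp add: pairing_dif_lin ham_def)
qed

lemma pb_var2: "pb c a (var l) = (\<Sum>i\<in>UNIV. PI c i l * pdiff i a)"
proof -
  have "pb c a (var l) = (\<Sum>i\<in>UNIV. \<Sum>j\<in>UNIV. if j = l then PI c i j * pdiff i a else 0)"
    unfolding pb_alt pdiff_var by (intro sum.cong refl) auto
  then show ?thesis by simp
qed

lemma vf_apply_ham: "vf_apply (ham c a) b = pb c a b"
proof -
  have "vf_apply (ham c a) b = (\<Sum>l\<in>UNIV. \<Sum>i\<in>UNIV. PI c i l * pdiff i a * pdiff l b)"
    by (simp add: vf_apply_def ham_def pb_var2 sum_distrib_right)
  also have "\<dots> = pb c a b" unfolding pb_alt by (rule sum.swap)
  finally show ?thesis .
qed

lemma NN_dif_var: "NN c a (dif (var i)) = (\<lambda>k. cst (1/2) * Gm c a i k)"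
proof (rule ext)
  fix k
  have "(\<Sum>j\<in>UNIV. cst (delta i j) * Gm c a j k) = (\<Sum>j\<in>UNIV. if j = i then Gm c a j k else 0)"
    by (intro sum.cong refl) (auto simp: delta_def)
  then show "NN c a (dif (var i)) k = cst (1/2) * Gm c a i k"
    by (simp add: NN_def dif_var)
qed

lemma pairing_dif_var: "pairing X (dif (var i)) = X i"
proof -
  have "pairing X (dif (var i)) = (\<Sum>j\<in>UNIV. if j = i then X j else 0)"
    unfolding pairing_def dif_var by (intro sum.cong refl) (auto simp: delta_def)
  then show ?thesis by simp
qed

lemma pairing_nablaV:
  "pairing (nablaV c (NN c) a X) (dif (lin z)) = pb c a (pairing X (dif (lin z))) - pairing X (NN c a (dif (lin z)))"
proof -
  have 1: "pairing (nablaV c (NN c) a X) (dif (lin z)) =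
     (\<Sum>i\<in>UNIV. pb c a (X i) * cst (z i)) - (\<Sum>i\<in>UNIV. (\<Sum>k\<in>UNIV. X k * (cst (1/2) * Gm c a i k)) * cst (z i))"
    by (simp add: pairing_dif_lin nablaV_def pairing_dif_var NN_dif_var left_diff_distrib sum_subtractf)
       (simp add: pairing_def)
  have 2: "pairing X (NN c a (dif (lin z))) = (\<Sum>k\<in>UNIV. \<Sum>i\<in>UNIV. X k * (cst (1/2) * Gm c a i k) * cst (z i))"
    by (simp add: pairing_def NN_def dif_lin sum_distrib_left mult_ac)
  show ?thesis unfolding 1 2 unfolding pairing_dif_lin pb_sum_cst2
    by (simp add: sum_distrib_right) (rule sum.swap)
qed

lemma pairing_vf_comm:
  "pairing (vf_comm X Y) (dif (lin z)) = vf_apply X (pairing Y (dif (lin z))) - vf_apply Y (pairing X (dif (lin z)))"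
proof -
  have g: "vf_apply X (\<Sum>i\<in>UNIV. Y i * cst (z i)) = (\<Sum>i\<in>UNIV. vf_apply X (Y i) * cst (z i))" for X Y
  proof -
    have "vf_apply X (\<Sum>i\<in>UNIV. Y i * cst (z i)) = (\<Sum>j\<in>UNIV. \<Sum>i\<in>UNIV. X j * pdiff j (Y i) * cst (z i))"
      by (simp add: vf_apply_def pdiff_sum pdiff_mult sum_distrib_left mult_ac)
    also have "\<dots> = (\<Sum>i\<in>UNIV. vf_apply X (Y i) * cst (z i))"
      by (subst sum.swap) (simp add: vf_apply_def sum_distrib_right)
    finally show ?thesis .
  qed
  show ?thesis
    by (simp add: pairing_dif_lin vf_comm_def g left_diff_distrib sum_subtractf)
qed

lemma ham_lin_eq: "pairing (ham c (lin w)) (dif (lin z)) = lin (lie_br c w z)"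
  by (simp add: pairing_ham pb_lin)

lemma NN_torsion:
  assumes L: "lie_algebra c"
  shows "pairing (torsion c (NN c) (lin v) (lin w)) (dif (lin z)) = cst (1/2) * lin (lie_br c (lie_br c v w) z)"
proof -
  have n: "NN c (lin v) (dif (lin z)) = dif (lin (\<lambda>k. 1/2 * lie_br c v z k))" for v
    by (simp add: dif_lin NN_lin_const)
  have j: "\<And>k. lie_br c v (lie_br c w z) k - lie_br c w (lie_br c v z) k = lie_br c (lie_br c v w) z k"
    by (rule jacobi'[OF L])
  show ?thesis
    unfolding torsion_def pairing_diff pairing_nablaV pairing_vf_comm n
    apply (simp only: pairing_ham pb_lin vf_apply_ham lin_scal lin_diff)
    apply (rule arg_cong[where f=lin])
    apply (rule ext)
    using j by (simp add: lie_br_scal2 lie_br_div2 algebra_simps)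
qed


theorem proposition5p1p1:
  fixes c :: "'n::finite \<Rightarrow> 'n \<Rightarrow> 'n \<Rightarrow> complex"
  assumes "lie_algebra c"
  shows "\<exists>N. preconnection c N \<and> poisson_compatible c N \<and>
     (\<forall>v w. N (lin v) (dif (lin w)) = fmul (cst (1/2)) (dif (lin (lie_br c v w)))) \<and>
     (\<forall>v w z. curvature c N (lin v) (lin w) (dif (lin z))
                = fmul (cst (-1/4)) (dif (lin (lie_br c (lie_br c v w) z)))) \<and>
     (\<forall>v w z. pairing (torsion c N (lin v) (lin w)) (dif (lin z))
                = cst (1/2) * lin (lie_br c (lie_br c v w) z))"
  using NN_pre[of c] NN_poisson[OF assms] NN_lin_dif[of c] NN_curv[OF assms] NN_torsion[OF assms]
  by blast

end
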